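(* Let $(F,t)\in U$ with $t\neq0$ and $Y=Y_{F,t}$. Then $\Gamma_1\cup\Gamma_2$ coincides with the locus in $F(Y)$ of lines on $Y$ passing through $p_0=[0,\dots,0,1]$.
   Context: $U=U_0\times\mathbb{A}^1$, where $U_0$ is the space of cubic forms $F(x_0,\dots,x_3)$ such that the curve cut out by $F$ on the quadric $x_0x_3=x_1x_2$ in $\mathbb{P}^3$ is smooth, avoids $[0,0,0,1]$, and is tangent with multiplicity $2$ to the lines $x_0=x_1=0$ and $x_0=x_2=0$. $Y_{F,t}\subset\mathbb{P}^5$ is $x_4^3-F(x_0,\dots,x_3)+x_5(x_0x_3-x_1x_2)+t\,x_0x_5^2=0$, and $F(Y)$ its Fano variety of lines. $C_i=(x_0=x_i=x_5=0)\cap(x_4^3=F)\subset\mathbb{P}^5$, $i=1,2$; for each $p\in C_i$ the line $\overline{p_0p}$ lies in $Y$, and $\Gamma_i\subset F(Y)$ denotes the image of the embedding $C_i\to F(Y)$, $p\mapsto\overline{p_0p}$. *)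

theory Defs
  imports "HOL-Analysis.Analysis"
begin

text \<open>Ground field: the complex numbers. Points of P^3 (resp. P^5) are represented by
nonzero vectors of complex^4 (resp. complex^6); coordinates x0..x3 are components 0..3,
and x0..x5 are components 0..5.\<close>

definition pt4 :: "complex \<Rightarrow> complex \<Rightarrow> complex \<Rightarrow> complex \<Rightarrow> complex^4" where
  "pt4 a b c d = (\<chi> i. if i = 0 then a else if i = 1 then b else if i = 2 then c else d)"

definition cubic_form :: "(complex^4 \<Rightarrow> complex) \<Rightarrow> bool" where
  "cubic_form F \<longleftrightarrow> (\<exists>c :: 4 \<Rightarrow> 4 \<Rightarrow> 4 \<Rightarrow> complex.
      \<forall>x. F x = (\<Sum>i\<in>UNIV. \<Sum>j\<in>UNIV. \<Sum>k\<in>UNIV. c i j k * x$i * x$j * x$k))"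

definition Qform :: "complex^4 \<Rightarrow> complex" where
  "Qform x = x$0 * x$3 - x$1 * x$2"

definition pdiff :: "(complex^4 \<Rightarrow> complex) \<Rightarrow> 4 \<Rightarrow> complex^4 \<Rightarrow> complex" where
  "pdiff G i x = deriv (\<lambda>s. G (x + s *s axis i 1)) 0"

text \<open>The curve {Q = F = 0} in P^3 is smooth: at every point of it the Jacobian
of (Q, F) has rank 2 (Jacobian criterion for complete intersections).\<close>
definition smooth_curve :: "(complex^4 \<Rightarrow> complex) \<Rightarrow> bool" where
  "smooth_curve F \<longleftrightarrow> (\<forall>x. x \<noteq> 0 \<and> Qform x = 0 \<and> F x = 0 \<longrightarrow>
      (\<forall>a b :: complex. (\<forall>i. a * pdiff Qform i x + b * pdiff F i x = 0) \<longrightarrow> a = 0 \<and> b = 0))"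

definition avoids_e3 :: "(complex^4 \<Rightarrow> complex) \<Rightarrow> bool" where
  "avoids_e3 F \<longleftrightarrow> \<not> (Qform (pt4 0 0 0 1) = 0 \<and> F (pt4 0 0 0 1) = 0)"

text \<open>Tangency with multiplicity 2 to the line x0 = x1 = 0 (which lies on the quadric):
the restriction of F to the line, a binary cubic in (x2,x3), has a root of multiplicity
exactly 2, i.e. it is l^2 m with l, m non-proportional linear forms.\<close>
definition tangent2_L1 :: "(complex^4 \<Rightarrow> complex) \<Rightarrow> bool" where
  "tangent2_L1 F \<longleftrightarrow> (\<exists>a b c d :: complex. a * d - b * c \<noteq> 0 \<and>
      (\<forall>u v. F (pt4 0 0 u v) = (b * u - a * v)^2 * (d * u - c * v)))"

definition tangent2_L2 :: "(complex^4 \<Rightarrow> complex) \<Rightarrow> bool" where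
  "tangent2_L2 F \<longleftrightarrow> (\<exists>a b c d :: complex. a * d - b * c \<noteq> 0 \<and>
      (\<forall>u v. F (pt4 0 u 0 v) = (b * u - a * v)^2 * (d * u - c * v)))"

definition U0 :: "(complex^4 \<Rightarrow> complex) set" where
  "U0 = {F. cubic_form F \<and> smooth_curve F \<and> avoids_e3 F \<and> tangent2_L1 F \<and> tangent2_L2 F}"

definition first4 :: "complex^6 \<Rightarrow> complex^4" where
  "first4 x = pt4 (x$0) (x$1) (x$2) (x$3)"

definition Yeq :: "(complex^4 \<Rightarrow> complex) \<Rightarrow> complex \<Rightarrow> complex^6 \<Rightarrow> complex" where
  "Yeq F t x = x$4 ^ 3 - F (first4 x) + x$5 * (x$0 * x$3 - x$1 * x$2) + t * x$0 * x$5 ^ 2"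

text \<open>Affine cone over Y.\<close>
definition Ycone :: "(complex^4 \<Rightarrow> complex) \<Rightarrow> complex \<Rightarrow> (complex^6) set" where
  "Ycone F t = {x. Yeq F t x = 0}"

text \<open>The projective line through the points [u],[v] of P^5, represented by the
2-dimensional linear subspace of complex^6 spanned by u, v.\<close>
definition pline :: "complex^6 \<Rightarrow> complex^6 \<Rightarrow> (complex^6) set" where
  "pline u v = {a *s u + b *s v | a b. True}"

definition lin_indep2 :: "complex^6 \<Rightarrow> complex^6 \<Rightarrow> bool" where
  "lin_indep2 u v \<longleftrightarrow> (\<forall>a b. a *s u + b *s v = 0 \<longrightarrow> a = 0 \<and> b = 0)"

definition is_pline :: "(complex^6) set \<Rightarrow> bool" where
  "is_pline L \<longleftrightarrow> (\<exists>u v. lin_indep2 u v \<and> L = pline u v)"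

definition Fano :: "(complex^4 \<Rightarrow> complex) \<Rightarrow> complex \<Rightarrow> (complex^6) set set" where
  "Fano F t = {L. is_pline L \<and> L \<subseteq> Ycone F t}"

definition p0 :: "complex^6" where
  "p0 = axis 5 1"

definition Ccurve :: "(complex^4 \<Rightarrow> complex) \<Rightarrow> 6 \<Rightarrow> (complex^6) set" where
  "Ccurve F i = {p. p \<noteq> 0 \<and> p$0 = 0 \<and> p$i = 0 \<and> p$5 = 0 \<and> p$4 ^ 3 = F (first4 p)}"

definition GammaLines :: "(complex^4 \<Rightarrow> complex) \<Rightarrow> 6 \<Rightarrow> (complex^6) set set" where
  "GammaLines F i = (\<lambda>p. pline p0 p) ` Ccurve F i"

end

theory Submission
  imports Defs
begin



lemma cubic_hom: assumes "cubic_form F" shows "F (c *s x) = c^3 * F x"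
proof -
  from assms obtain k where k: "\<And>x. F x = (\<Sum>i\<in>UNIV. \<Sum>j\<in>UNIV. \<Sum>l\<in>UNIV. k i j l * x$i * x$j * x$l)"
    unfolding cubic_form_def by blast
  show ?thesis unfolding k by (simp add: sum_distrib_left algebra_simps power3_eq_cube)
qed

lemma first4_line: "p$5 = 0 \<Longrightarrow> first4 (a *s p + b *s p0) = a *s first4 p"
  by (simp add: first4_def pt4_def p0_def vec_eq_iff axis_def)

lemma Yeq_line: assumes "cubic_form F" "p$5 = 0"
  shows "Yeq F t (a *s p + b *s p0) = a^3 * (p$4^3 - F (first4 p)) + a^2*b*(p$0*p$3 - p$1*p$2) + t*a*p$0*b^2"
proof -
  have "F (first4 (a *s p + b *s p0)) = a^3 * F (first4 p)" using assms by (simp add: first4_line cubic_hom)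
  then show ?thesis using assms by (simp add: Yeq_def p0_def axis_def algebra_simps power3_eq_cube power2_eq_square)
qed



lemma pline_swap: "pline u v = pline v u"
  unfolding pline_def by (auto, (metis add.commute)+)

lemma pline_repl: assumes "w = \<alpha> *s u + \<beta> *s v" "\<alpha> \<noteq> 0" shows "pline u v = pline w v"
proof
  show "pline u v \<subseteq> pline w v"
  proof
    fix x assume "x \<in> pline u v"
    then obtain a b where x: "x = a *s u + b *s v" unfolding pline_def by blast
    have "x = (a/\<alpha>) *s w + (b - a*\<beta>/\<alpha>) *s v"
      using assms by (simp add: x vec_eq_iff field_simps)
    then show "x \<in> pline w v" unfolding pline_def by blast
  qed
next
  show "pline w v \<subseteq> pline u v"
  proof
    fix x assume "x \<in> pline w v"
    then obtain a b where x: "x = a *s w + b *s v" unfolding pline_def by blast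
    have "x = (a*\<alpha>) *s u + (a*\<beta> + b) *s v"
      using assms by (simp add: x vec_eq_iff field_simps)
    then show "x \<in> pline u v" unfolding pline_def by blast
  qed
qed

lemma p0_5: "p0 $ 5 = 1" by (simp add: p0_def axis_def)


lemma reduce:
  assumes "is_pline L" "p0 \<in> L"
  shows "\<exists>p. p$5 = 0 \<and> p \<noteq> 0 \<and> L = pline p0 p"
proof -
  obtain u v where li: "lin_indep2 u v" and L: "L = pline u v" using assms unfolding is_pline_def by blast
  have "p0 \<in> pline u v" using assms(2) L by simp
  then obtain \<alpha> \<beta> where pe: "p0 = \<alpha> *s u + \<beta> *s v" unfolding pline_def by auto
  have p0nz: "p0 \<noteq> 0" using p0_5 by auto
  have "\<exists>w. lin_indep2 p0 w \<and> L = pline p0 w"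
  proof (cases "\<alpha> = 0")
    case False
    have "L = pline p0 v" using pline_repl[OF pe False] L by simp
    moreover have "lin_indep2 p0 v"
      unfolding lin_indep2_def
    proof (intro allI impI)
      fix a b assume "a *s p0 + b *s v = 0"
      then have "(a*\<alpha>) *s u + (a*\<beta> + b) *s v = 0" by (simp add: pe vec_eq_iff algebra_simps)
      then have "a*\<alpha> = 0 \<and> a*\<beta>+b = 0" using li unfolding lin_indep2_def by blast
      then show "a = 0 \<and> b = 0" using False by auto
    qed
    ultimately show ?thesis by blast
  next
    case True
    then have b: "\<beta> \<noteq> 0" using pe p0nz by auto
    have pe': "p0 = \<beta> *s v + \<alpha> *s u" using pe by (simp add: add.commute)
    have "L = pline v u" using L pline_swap[of u v] by simp
    also have "\<dots> = pline p0 u" by (rule pline_repl[OF pe' b])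
    finally have "L = pline p0 u" .
    moreover have "lin_indep2 p0 u"
      unfolding lin_indep2_def
    proof (intro allI impI)
      fix a b assume "a *s p0 + b *s u = 0"
      then have "(a*\<alpha> + b) *s u + (a*\<beta>) *s v = 0" by (simp add: pe vec_eq_iff algebra_simps)
      then have "a*\<alpha> + b = 0 \<and> a*\<beta> = 0" using li unfolding lin_indep2_def by blast
      then show "a = 0 \<and> b = 0" using b by auto
    qed
    ultimately show ?thesis by blast
  qed
  then obtain w where li2: "lin_indep2 p0 w" and L2: "L = pline p0 w" by blast
  define p where "p = w - (w$5) *s p0"
  have "p$5 = 0" by (simp add: p_def p0_5)
  moreover have "p \<noteq> 0"
  proof
    assume "p = 0"
    then have z: "w - (w$5) *s p0 = 0" unfolding p_def .
    have "(- (w$5)) *s p0 + 1 *s w = w - (w$5) *s p0" by (simp add: vec_eq_iff)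
    then have "(- (w$5)) *s p0 + 1 *s w = 0" using z by simp
    then have "(1::complex) = 0" using li2 unfolding lin_indep2_def by blast
    then show False by simp
  qed
  moreover have "L = pline p0 p"
  proof -
    have "w = 1 *s p + (w$5) *s p0" by (simp add: p_def vec_eq_iff)
    then have "pline p p0 = pline w p0" by (rule pline_repl) simp
    then show ?thesis using L2 pline_swap[of p0 w] pline_swap[of p0 p] by simp
  qed
  ultimately show ?thesis by blast
qed


lemma line_in_Y: assumes "cubic_form F" "p$5 = 0" "t \<noteq> 0"
  shows "pline p0 p \<subseteq> Ycone F t \<longleftrightarrow> p$0 = 0 \<and> p$1 * p$2 = 0 \<and> p$4^3 = F (first4 p)"
proof
  assume A: "pline p0 p \<subseteq> Ycone F t"
  have e: "(p$4^3 - F (first4 p)) + b*(p$0*p$3 - p$1*p$2) + t*p$0*b^2 = 0" for b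
  proof -
    have "b *s p0 + 1 *s p \<in> pline p0 p" unfolding pline_def by blast
    then have "Yeq F t (1 *s p + b *s p0) = 0" using A by (auto simp: Ycone_def add.commute)
    then show ?thesis using Yeq_line[OF assms(1,2), of t 1 b] by simp
  qed
  have e0: "p$4^3 - F (first4 p) = 0" using e[of 0] by simp
  have e1: "(p$0*p$3 - p$1*p$2) + t*p$0 = 0" using e[of 1] e0 by simp
  have e2: "- (p$0*p$3 - p$1*p$2) + t*p$0 = 0" using e[of "-1"] e0 by simp
  have "2*(t*p$0) = 0" using arg_cong2[OF e1 e2, of "(+)"] by simp
  then have "p$0 = 0" using assms(3) by simp
  then show "p$0 = 0 \<and> p$1 * p$2 = 0 \<and> p$4^3 = F (first4 p)" using e1 e0 by simp
next
  assume B: "p$0 = 0 \<and> p$1 * p$2 = 0 \<and> p$4^3 = F (first4 p)"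
  show "pline p0 p \<subseteq> Ycone F t"
  proof
    fix x assume "x \<in> pline p0 p"
    then obtain a b where x: "x = b *s p + a *s p0" unfolding pline_def by (auto simp: add.commute)
    show "x \<in> Ycone F t" unfolding Ycone_def x using Yeq_line[OF assms(1,2), of t b a] B by simp
  qed
qed
theorem lemma5p4:
  fixes F :: "complex^4 \<Rightarrow> complex" and t :: complex
  assumes "F \<in> U0" and "t \<noteq> 0"
  shows "GammaLines F 1 \<union> GammaLines F 2 = {L \<in> Fano F t. p0 \<in> L}"
proof
  have cf: "cubic_form F" using assms(1) by (simp add: U0_def)
  show "GammaLines F 1 \<union> GammaLines F 2 \<subseteq> {L \<in> Fano F t. p0 \<in> L}"
  proof
    fix L assume "L \<in> GammaLines F 1 \<union> GammaLines F 2"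
    then obtain p where L: "L = pline p0 p" and pc: "p \<noteq> 0" "p$0 = 0" "p$5 = 0" "p$1 * p$2 = 0" "p$4^3 = F (first4 p)"
      unfolding GammaLines_def Ccurve_def by auto
    have li: "lin_indep2 p0 p" unfolding lin_indep2_def
    proof (intro allI impI)
      fix a b assume h: "a *s p0 + b *s p = 0"
      then have "(a *s p0 + b *s p)$5 = 0" by simp
      then have a: "a = 0" using pc(3) p0_5 by simp
      then have "b *s p = 0" using h by simp
      then show "a = 0 \<and> b = 0" using a pc(1) by simp
    qed
    have "L \<subseteq> Ycone F t" using L line_in_Y[OF cf pc(3) assms(2)] pc by simp
    moreover have "p0 \<in> L" unfolding L pline_def by (rule CollectI, rule exI[of _ 1], rule exI[of _ 0]) simp
    ultimately show "L \<in> {L \<in> Fano F t. p0 \<in> L}" using li L unfolding Fano_def is_pline_def by blast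
  qed
next
  have cf: "cubic_form F" using assms(1) by (simp add: U0_def)
  show "{L \<in> Fano F t. p0 \<in> L} \<subseteq> GammaLines F 1 \<union> GammaLines F 2"
  proof
    fix L assume "L \<in> {L \<in> Fano F t. p0 \<in> L}"
    then have h: "is_pline L" "L \<subseteq> Ycone F t" "p0 \<in> L" unfolding Fano_def by auto
    obtain p where p: "p$5 = 0" "p \<noteq> 0" "L = pline p0 p" using reduce[OF h(1,3)] by blast
    have c: "p$0 = 0 \<and> p$1 * p$2 = 0 \<and> p$4^3 = F (first4 p)"
      using line_in_Y[OF cf p(1) assms(2)] h(2) p(3) by simp
    then have "p \<in> Ccurve F 1 \<or> p \<in> Ccurve F 2" using p unfolding Ccurve_def by auto
    then show "L \<in> GammaLines F 1 \<union> GammaLines F 2" using p(3) unfolding GammaLines_def by blast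
  qed
qed

end
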